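(* Let $L\subseteq\Sigma^*$ with $L\notin\{\emptyset,\Sigma^*\}$, and suppose $L$ is prefix-closed, suffix-closed, factor-closed, or subword-closed. Then: - $L^{-*}=L^-\cup\{\epsilon\}$ and $L^{-*-}=L\setminus\{\epsilon\}$; - $(L\setminus\{\epsilon\})^*=L^*$; - $L^*$ is closed under the same relation as $L$. Consequently, every language obtainable from $L$ by finitely many applications of Kleene star and complement is one of the eight languages $L$, $L^-$, $L^-\cup\{\epsilon\}$, $L\setminus\{\epsilon\}$, $L^*$, $L^{*-}$, $L^{*-}\cup\{\epsilon\}$, $L^*\setminus\{\epsilon\}$.
   Context: $L^-=\Sigma^*\setminus L$ denotes complement and $L^*$ Kleene star. Notation such as $L^{-*-}$ means apply complement, then star, then complement, in that order. A language is prefix-closed (suffix-, factor-, subword-closed) if it contains every prefix (suffix, factor, subword) of each of its words, where subword means scattered subsequence. *)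

theory Defs
  imports Main "HOL-Library.Sublist"
begin

text \<open>Languages over the alphabet given by the (nonempty) type 'a; words are lists,
  \<Sigma>* is UNIV, complement is set complement -L.\<close>

inductive_set kstar :: "'a list set \<Rightarrow> 'a list set" for L :: "'a list set" where
  kstar_Nil: "[] \<in> kstar L"
| kstar_app: "u \<in> L \<Longrightarrow> v \<in> kstar L \<Longrightarrow> u @ v \<in> kstar L"

definition closed_under :: "('a list \<Rightarrow> 'a list \<Rightarrow> bool) \<Rightarrow> 'a list set \<Rightarrow> bool" where
  "closed_under R L \<longleftrightarrow> (\<forall>w\<in>L. \<forall>u. R u w \<longrightarrow> u \<in> L)"

inductive_set star_compl_closure :: "'a list set \<Rightarrow> 'a list set set" for L :: "'a list set" where
  sc_base: "L \<in> star_compl_closure L"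
| sc_star: "K \<in> star_compl_closure L \<Longrightarrow> kstar K \<in> star_compl_closure L"
| sc_compl: "K \<in> star_compl_closure L \<Longrightarrow> - K \<in> star_compl_closure L"

end

theory Submission
  imports Defs
begin

lemma kstar_incl: "u \<in> K \<Longrightarrow> u \<in> kstar K"
  by (metis append_Nil2 kstar_Nil kstar_app)

lemma kstar_append: "u \<in> kstar K \<Longrightarrow> v \<in> kstar K \<Longrightarrow> u @ v \<in> kstar K"
  by (induction rule: kstar.induct) (auto intro: kstar_app)

lemma kstar_sub: "A \<subseteq> kstar B \<Longrightarrow> kstar A \<subseteq> kstar B"
proof
  fix w assume a: "A \<subseteq> kstar B" and "w \<in> kstar A"
  from \<open>w \<in> kstar A\<close> show "w \<in> kstar B" using a
    by (induction rule: kstar.induct) (auto intro: kstar_Nil kstar_append)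
qed

lemma kstar_idem: "kstar (kstar K) = kstar K"
  by (rule antisym, rule kstar_sub, simp, rule subsetI, rule kstar_incl)

lemma kstar_minus_Nil: "kstar (K - {[]}) = kstar K"
proof (rule antisym)
  show "kstar (K - {[]}) \<subseteq> kstar K" by (rule kstar_sub) (auto intro: kstar_incl)
  show "kstar K \<subseteq> kstar (K - {[]})"
    by (rule kstar_sub) (auto intro: kstar_incl kstar_Nil)
qed

lemma kstar_un_Nil: "kstar (K \<union> {[]}) = kstar K"
proof (rule antisym)
  show "kstar (K \<union> {[]}) \<subseteq> kstar K" by (rule kstar_sub) (auto intro: kstar_incl kstar_Nil)
  show "kstar K \<subseteq> kstar (K \<union> {[]})" by (rule kstar_sub) (auto intro: kstar_incl)
qed

lemma kstar_compl_pre: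
  assumes "closed_under prefix K"
  shows "kstar (- K) \<subseteq> - K \<union> {[]}"
proof
  fix w assume "w \<in> kstar (- K)"
  then show "w \<in> - K \<union> {[]}"
  proof (induction rule: kstar.induct)
    case (kstar_app u v)
    then show ?case using assms unfolding closed_under_def by auto
  qed simp
qed

lemma kstar_compl_suf:
  assumes "closed_under suffix K"
  shows "kstar (- K) \<subseteq> - K \<union> {[]}"
proof
  fix w assume "w \<in> kstar (- K)"
  then show "w \<in> - K \<union> {[]}"
  proof (induction rule: kstar.induct)
    case (kstar_app u v)
    show ?case
    proof (cases "v = []")
      case True then show ?thesis using kstar_app by simp
    next
      case False
      then have "v \<notin> K" using kstar_app by auto
      moreover have "suffix v (u @ v)" by (simp add: suffix_def)
      ultimately show ?thesis using assms unfolding closed_under_def by blast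
    qed
  qed simp
qed

lemma pre_closed_kstar:
  assumes "closed_under prefix K"
  shows "closed_under prefix (kstar K)"
  unfolding closed_under_def
proof (intro ballI allI impI)
  fix w u assume "w \<in> kstar K" "prefix u w"
  then show "u \<in> kstar K"
  proof (induction arbitrary: u rule: kstar.induct)
    case kstar_Nil then show ?case by (auto simp: kstar.kstar_Nil list_emb_Nil2)
  next
    case (kstar_app x v)
    from kstar_app.prems consider "prefix u x" | us where "u = x @ us" "prefix us v"
      by (auto simp: prefix_append)
    then show ?case
    proof cases
      case 1 then show ?thesis using assms kstar_app.hyps(1)
        unfolding closed_under_def by (auto intro: kstar_incl)
    next
      case 2 then show ?thesis using kstar_app by (auto intro: kstar.kstar_app)
    qed
  qed
qed

lemma suf_closed_kstar:
  assumes "closed_under suffix K"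
  shows "closed_under suffix (kstar K)"
  unfolding closed_under_def
proof (intro ballI allI impI)
  fix w u assume "w \<in> kstar K" "suffix u w"
  then show "u \<in> kstar K"
  proof (induction arbitrary: u rule: kstar.induct)
    case kstar_Nil then show ?case by (auto simp: kstar.kstar_Nil list_emb_Nil2)
  next
    case (kstar_app x v)
    from kstar_app.prems consider "suffix u v" | us where "u = us @ v" "suffix us x"
      by (auto simp: suffix_append)
    then show ?case
    proof cases
      case 1 then show ?thesis using kstar_app by auto
    next
      case 2 then show ?thesis using kstar_app assms
        unfolding closed_under_def by (auto intro: kstar.kstar_app)
    qed
  qed
qed

lemma sub_closed_pre: "closed_under sublist K \<Longrightarrow> closed_under prefix K"
  unfolding closed_under_def by blast
lemma sub_closed_suf: "closed_under sublist K \<Longrightarrow> closed_under suffix K"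
  unfolding closed_under_def by blast
lemma seq_closed_sub: "closed_under subseq K \<Longrightarrow> closed_under sublist K"
  unfolding closed_under_def by blast

lemma sub_closed_kstar:
  assumes "closed_under sublist K"
  shows "closed_under sublist (kstar K)"
  unfolding closed_under_def
proof (intro ballI allI impI)
  have P: "closed_under prefix (kstar K)" using pre_closed_kstar sub_closed_pre assms by blast
  fix w u assume "w \<in> kstar K" "sublist u w"
  then show "u \<in> kstar K"
  proof (induction arbitrary: u rule: kstar.induct)
    case kstar_Nil then show ?case by (auto simp: kstar.kstar_Nil list_emb_Nil2)
  next
    case (kstar_app x v)
    from kstar_app.prems consider "sublist u x" | "sublist u v"
       | xs1 xs2 where "u = xs1 @ xs2" "suffix xs1 x" "prefix xs2 v"
      by (auto simp: sublist_append)
    then show ?case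
    proof cases
      case 1 then show ?thesis using assms kstar_app.hyps(1)
        unfolding closed_under_def by (auto intro: kstar_incl)
    next
      case 2 then show ?thesis using kstar_app by auto
    next
      case 3
      have "xs1 \<in> K" using 3 assms kstar_app.hyps(1) unfolding closed_under_def by auto
      moreover have "xs2 \<in> kstar K" using 3 P kstar_app.hyps(2) unfolding closed_under_def by auto
      ultimately show ?thesis using 3 by (auto intro: kstar.kstar_app)
    qed
  qed
qed

lemma seq_closed_kstar:
  assumes "closed_under subseq K"
  shows "closed_under subseq (kstar K)"
  unfolding closed_under_def
proof (intro ballI allI impI)
  fix w u assume "w \<in> kstar K" "subseq u w"
  then show "u \<in> kstar K"
  proof (induction arbitrary: u rule: kstar.induct)
    case kstar_Nil then show ?case using list_emb_Nil2 kstar.kstar_Nil by metis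
  next
    case (kstar_app x v)
    from kstar_app.prems obtain xs1 xs2 where "u = xs1 @ xs2" "subseq xs1 x" "subseq xs2 v"
      by (auto elim: subseq_appendE)
    moreover have "xs1 \<in> K" using calculation assms kstar_app.hyps(1)
      unfolding closed_under_def by auto
    ultimately show ?case using kstar_app by (auto intro: kstar.kstar_app)
  qed
qed

lemma general:
  assumes "R \<in> {prefix, suffix, sublist, subseq}" "closed_under R K"
  shows "kstar (- K) \<subseteq> - K \<union> {[]}" "closed_under R (kstar K)"
proof -
  have "closed_under prefix K \<or> closed_under suffix K"
    using assms sub_closed_pre seq_closed_sub by blast
  then show "kstar (- K) \<subseteq> - K \<union> {[]}" using kstar_compl_pre kstar_compl_suf by blast
  show "closed_under R (kstar K)"
    using assms pre_closed_kstar suf_closed_kstar sub_closed_kstar seq_closed_kstar by blast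
qed

lemma kstar_compl_eq:
  assumes "R \<in> {prefix, suffix, sublist, subseq}" "closed_under R K"
  shows "kstar (- K) = - K \<union> {[]}"
proof (rule antisym)
  show "kstar (- K) \<subseteq> - K \<union> {[]}" using general(1)[OF assms] .
  show "- K \<union> {[]} \<subseteq> kstar (- K)" by (auto intro: kstar_incl kstar_Nil)
qed

lemma Nil_in:
  assumes "R \<in> {prefix, suffix, sublist, subseq}" "closed_under R K" "K \<noteq> {}"
  shows "[] \<in> K"
proof -
  obtain w where "w \<in> K" using assms(3) by blast
  moreover have "R [] w" using assms(1) by auto
  ultimately show ?thesis using assms(2) unfolding closed_under_def by blast
qed

theorem mainTheorem11:
  fixes L :: "'a list set" and R :: "'a list \<Rightarrow> 'a list \<Rightarrow> bool"
  assumes "L \<noteq> {}" and "L \<noteq> UNIV"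
    and "R \<in> {prefix, suffix, sublist, subseq}"
    and "closed_under R L"
  shows "kstar (- L) = - L \<union> {[]} \<and>
         - kstar (- L) = L - {[]} \<and>
         kstar (L - {[]}) = kstar L \<and>
         closed_under R (kstar L) \<and>
         star_compl_closure L \<subseteq>
           {L, - L, - L \<union> {[]}, L - {[]}, kstar L, - kstar L,
            - kstar L \<union> {[]}, kstar L - {[]}}"
proof -
  have E1: "kstar (- L) = - L \<union> {[]}" using kstar_compl_eq assms(3,4) .
  have N: "[] \<in> L" using Nil_in assms(3,4,1) .
  have C: "closed_under R (kstar L)" using general(2) assms(3,4) .
  have E2: "kstar (- kstar L) = - kstar L \<union> {[]}" using kstar_compl_eq assms(3) C .
  have N2: "[] \<in> kstar L" by (rule kstar_Nil)
  have E3: "kstar (- L \<union> {[]}) = - L \<union> {[]}" using E1 kstar_un_Nil by metis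
  have E4: "kstar (- kstar L \<union> {[]}) = - kstar L \<union> {[]}" using E2 kstar_un_Nil by metis
  have E5: "kstar (kstar L - {[]}) = kstar L" using kstar_minus_Nil kstar_idem by metis
  have S: "star_compl_closure L \<subseteq>
           {L, - L, - L \<union> {[]}, L - {[]}, kstar L, - kstar L,
            - kstar L \<union> {[]}, kstar L - {[]}}"
  proof
    fix K assume "K \<in> star_compl_closure L"
    then show "K \<in> {L, - L, - L \<union> {[]}, L - {[]}, kstar L, - kstar L,
            - kstar L \<union> {[]}, kstar L - {[]}}"
    proof (induction rule: star_compl_closure.induct)
      case sc_base then show ?case by simp
    next
      case (sc_star K)
      from sc_star.IH show ?case
        apply (simp only: insert_iff empty_iff)
        apply (elim disjE FalseE)
        by (simp_all only: E1 E2 E3 E4 E5 kstar_minus_Nil[of L] kstar_idem[of L] insert_iff simp_thms)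
    next
      case (sc_compl K)
      have a: "- (- L \<union> {[]}) = L - {[]}" "- (L - {[]}) = - L \<union> {[]}"
        "- (- kstar L \<union> {[]}) = kstar L - {[]}" "- (kstar L - {[]}) = - kstar L \<union> {[]}"
        using N N2 by blast+
      from sc_compl.IH show ?case
        apply (simp only: insert_iff empty_iff)
        apply (elim disjE FalseE)
        by (simp_all only: a double_compl insert_iff simp_thms)
    qed
  qed
  have "- kstar (- L) = L - {[]}" using E1 N by blast
  with E1 C S kstar_minus_Nil show ?thesis by (intro conjI)
qed

end
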